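(* For all $r,s\in\mathbb{Z}_+$ there exists a constant $c(r,s)>0$ such that for every integer $n\ge 2r+1$ and every $y\in(-1,1)$ there exists an algebraic polynomial $p_{n,y}(x)$ in $x$ of degree at most $n$ satisfying, for all $x\in[-1,1]$, $$\big|\operatorname{sign}(x-y)-p_{n,y}(x)\big|\le c(r,s)\left(\frac{1-x^2}{1-x^2+1-y^2+\frac{1}{n^2}\,|\operatorname{sign}x-\operatorname{sign}y|}\right)^{r}\left(\frac{\delta_n(y)}{|x-y|+\delta_n(y)}\right)^{s},$$ where $\delta_n(y)=\frac{\sqrt{1-y^2}}{n}+\frac{1}{n^2}$.
   Context: $\operatorname{sign}t$ equals $1$ for $t>0$, $-1$ for $t<0$, and $0$ for $t=0$. $\mathbb{Z}_+=\{0,1,2,\dots\}$. *)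

theory Defs
  imports "HOL-Analysis.Analysis" "HOL-Computational_Algebra.Polynomial"
begin

definition delta_n :: "nat \<Rightarrow> real \<Rightarrow> real" where
  "delta_n n y = sqrt (1 - y^2) / real n + 1 / (real n)^2"

end

theory Submission
  imports Defs
begin

lemma sin_ge_lin:
  fixes x :: real assumes "0 \<le> x" "x \<le> pi/2" shows "x / pi \<le> sin x"
proof (cases "x \<le> pi/3")
  case True
  have "sin 0 - 0/2 \<le> sin x - x/2"
  proof (rule DERIV_nonneg_imp_nondecreasing[OF assms(1)])
    fix t assume t: "0 \<le> t" "t \<le> x"
    have "cos (pi/3) \<le> cos t" using t True by (subst cos_mono_le_eq) auto
    hence "0 \<le> cos t - 1/2" by (simp add: cos_60)
    moreover have "DERIV (\<lambda>x. sin x - x/2) t :> cos t - 1/2"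
      by (auto intro!: derivative_eq_intros)
    ultimately show "\<exists>y. DERIV (\<lambda>x. sin x - x/2) t :> y \<and> 0 \<le> y" by blast
  qed
  hence "x/2 \<le> sin x" by simp
  moreover have "x / pi \<le> x/2" using assms pi_ge_two by (intro divide_left_mono) (auto simp: mult_pos_pos)
  ultimately show ?thesis by linarith
next
  case False
  have "sin (pi/3) \<le> sin x" using False assms by (subst sin_mono_le_eq) auto
  hence "sqrt 3 / 2 \<le> sin x" by (simp add: sin_60)
  moreover have "1 \<le> sqrt 3" by simp
  moreover have "x / pi \<le> 1/2" using assms by (simp add: field_simps)
  ultimately show ?thesis by linarith
qed

lemma sin_ge_lin2:
  fixes x :: real assumes "0 \<le> x" "x \<le> pi/2 + 1" shows "x / (2*pi) \<le> sin x"
proof (cases "x \<le> pi/2")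
  case True
  have "x/(2*pi) \<le> x/pi" using assms pi_gt_zero by (intro divide_left_mono mult_pos_pos) auto
  with sin_ge_lin[OF assms(1) True] show ?thesis by linarith
next
  case False
  have e: "sin x = cos (x - pi/2)" by (simp add: cos_diff)
  have p3: "3 < pi" by (rule pi_gt3)
  have "cos 1 \<le> cos (x - pi/2)"
    by (rule cos_monotone_0_pi_le) (use False assms p3 in linarith)+
  moreover have "cos (pi/3) \<le> cos 1"
    by (rule cos_monotone_0_pi_le) (use p3 in linarith)+
  ultimately have "1/2 \<le> sin x" using e by (simp add: cos_60)
  moreover have "x/(2*pi) \<le> 1/2" using assms p3 by (simp add: field_simps)
  ultimately show ?thesis by linarith
qed


definition Dk :: "nat \<Rightarrow> real \<Rightarrow> real" where
  "Dk l v = 1 + 2 * (\<Sum>j\<in>{1..l}. cos (real j * v))"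

lemma Dk_sin: "Dk l v * sin (v/2) = sin ((real l + 1/2) * v)"
proof (induction l)
  case 0 then show ?case by (simp add: Dk_def)
next
  case (Suc l)
  have "Dk (Suc l) v = Dk l v + 2 * cos (real (Suc l) * v)"
    by (simp add: Dk_def)
  hence "Dk (Suc l) v * sin (v/2) = sin ((real l + 1/2) * v) + 2 * (cos (real (Suc l) * v) * sin (v/2))"
    using Suc by (simp add: algebra_simps)
  also have "2 * (cos (real (Suc l) * v) * sin (v/2)) = sin (real (Suc l) * v + v/2) - sin (real (Suc l) * v - v/2)"
    by (simp add: cos_times_sin)
  also have "real (Suc l) * v - v/2 = (real l + 1/2) * v" by (simp add: algebra_simps)
  also have "real (Suc l) * v + v/2 = (real (Suc l) + 1/2) * v" by (simp add: algebra_simps)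
  finally show ?case by simp
qed

definition Gk :: "nat \<Rightarrow> real \<Rightarrow> real" where
  "Gk m v = (\<Sum>l<m. Dk l v)"

lemma Gk_sin: "Gk m v * (sin (v/2))^2 = (sin (real m * v / 2))^2"
proof -
  have "Gk m v * (sin (v/2))^2 = (\<Sum>l<m. sin ((real l + 1/2) * v) * sin (v/2))"
    by (simp add: Gk_def sum_distrib_right power2_eq_square Dk_sin[symmetric] mult.assoc)
  also have "\<dots> = (\<Sum>l<m. (cos (real l * v) - cos (real (Suc l) * v)) / 2)"
  proof (rule sum.cong[OF refl])
    fix l
    have "sin ((real l + 1/2) * v) * sin (v/2) = (cos ((real l + 1/2) * v - v/2) - cos ((real l + 1/2) * v + v/2))/2"
      by (simp add: cos_diff cos_add)
    also have "(real l + 1/2) * v - v/2 = real l * v" by (simp add: algebra_simps)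
    also have "(real l + 1/2) * v + v/2 = real (Suc l) * v" by (simp add: algebra_simps)
    finally show "sin ((real l + 1/2) * v) * sin (v/2) = (cos (real l * v) - cos (real (Suc l) * v)) / 2" .
  qed
  also have "\<dots> = (\<Sum>l<m. cos (real l * v) - cos (real (Suc l) * v)) / 2"
    by (simp add: sum_divide_distrib)
  also have "\<dots> = (1 - cos (real m * v)) / 2"
    by (subst sum_lessThan_telescope'[where f = "\<lambda>l. cos (real l * v)"]) simp
  also have "\<dots> = (sin (real m * v / 2))^2"
    using cos_double_sin[of "real m * v / 2"] by simp
  finally show ?thesis .
qed

lemma Dk_abs: "\<bar>Dk l v\<bar> \<le> 1 + 2 * real l"
proof -
  have "\<bar>\<Sum>j\<in>{1..l}. cos (real j * v)\<bar> \<le> (\<Sum>j\<in>{1..l}. \<bar>cos (real j * v)\<bar>)"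
    by (rule sum_abs)
  also have "\<dots> \<le> (\<Sum>j\<in>{1..l}. 1)" by (intro sum_mono) simp
  finally have "\<bar>\<Sum>j\<in>{1..l}. cos (real j * v)\<bar> \<le> real l" by simp
  thus ?thesis unfolding Dk_def by linarith
qed

lemma Gk_abs1: "\<bar>Gk m v\<bar> \<le> 2 * (real m)^2"
proof -
  have "\<bar>Gk m v\<bar> \<le> (\<Sum>l<m. \<bar>Dk l v\<bar>)" unfolding Gk_def by (rule sum_abs)
  also have "\<dots> \<le> (\<Sum>l<m. 2 * real m)"
  proof (intro sum_mono)
    fix l assume "l \<in> {..<m}"
    hence "real l + 1 \<le> real m" by auto
    thus "\<bar>Dk l v\<bar> \<le> 2 * real m" using Dk_abs[of l v] by linarith
  qed
  finally show ?thesis by (simp add: power2_eq_square)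
qed

lemma Gk_abs2: assumes "sin (v/2) \<noteq> 0" shows "\<bar>Gk m v\<bar> \<le> 1 / (sin (v/2))^2"
proof -
  have pos: "0 < (sin (v/2))^2" using assms by simp
  have "\<bar>Gk m v * (sin (v/2))^2\<bar> = (sin (real m * v / 2))^2"
    by (simp add: Gk_sin)
  hence "\<bar>Gk m v\<bar> * (sin (v/2))^2 = (sin (real m * v / 2))^2"
    by (simp add: abs_mult)
  also have "\<dots> \<le> 1" by (simp add: abs_square_le_1)
  finally show ?thesis using pos by (simp add: field_simps)
qed

lemma Gk_eq: assumes "sin (v/2) \<noteq> 0" shows "Gk m v = (sin (real m * v / 2))^2 / (sin (v/2))^2"
  using Gk_sin[of m v] assms by (simp add: field_simps)

fun cheb :: "nat \<Rightarrow> real poly" where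
  "cheb 0 = 1"
| "cheb (Suc 0) = [:0, 1:]"
| "cheb (Suc (Suc n)) = [:0, 2:] * cheb (Suc n) - cheb n"

lemma poly_cheb: "poly (cheb n) (cos t) = cos (real n * t)"
proof (induction n rule: cheb.induct)
  case (3 n)
  have "cos (real (Suc (Suc n)) * t) = cos (real (Suc n) * t + t)" by (simp add: algebra_simps)
  also have "\<dots> = 2 * cos t * cos (real (Suc n) * t) - cos (real (Suc n) * t - t)"
    by (simp add: cos_add cos_diff)
  also have "real (Suc n) * t - t = real n * t" by (simp add: algebra_simps)
  finally show ?case using 3 by simp
qed auto

lemma degree_cheb: "degree (cheb n) \<le> n"
proof (induction n rule: cheb.induct)
  case (3 n)
  have "degree ([:0, 2:] * cheb (Suc n)) \<le> Suc (Suc n)"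
    using degree_mult_le[of "[:0, 2:]" "cheb (Suc n)"] 3(1) by simp
  moreover have "degree (cheb n) \<le> Suc (Suc n)" using 3(2) by simp
  ultimately show ?case by (simp add: degree_diff_le)
qed auto

definition Pk :: "nat \<Rightarrow> real \<Rightarrow> real poly" where
  "Pk m th = (\<Sum>l<m. [:2:] + (\<Sum>j\<in>{1..l}. smult (4 * cos (real j * th)) (cheb j)))"

lemma poly_Pk: "poly (Pk m th) (cos t) = Gk m (t - th) + Gk m (t + th)"
proof -
  have "poly (Pk m th) (cos t) = (\<Sum>l<m. 2 + (\<Sum>j\<in>{1..l}. 4 * cos (real j * th) * cos (real j * t)))"
    by (simp add: Pk_def poly_sum poly_cheb)
  also have "\<dots> = (\<Sum>l<m. Dk l (t - th) + Dk l (t + th))"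
  proof (rule sum.cong[OF refl])
    fix l
    have "(\<Sum>j\<in>{1..l}. 4 * cos (real j * th) * cos (real j * t)) =
          2 * (\<Sum>j\<in>{1..l}. cos (real j * (t - th))) + 2 * (\<Sum>j\<in>{1..l}. cos (real j * (t + th)))"
      by (simp add: sum_distrib_left sum.distrib[symmetric] algebra_simps cos_add cos_diff)
    thus "2 + (\<Sum>j\<in>{1..l}. 4 * cos (real j * th) * cos (real j * t)) = Dk l (t - th) + Dk l (t + th)"
      by (simp add: Dk_def)
  qed
  finally show ?thesis by (simp add: Gk_def sum.distrib)
qed

lemma degree_Pk: "degree (Pk m th) \<le> m - 1"
  unfolding Pk_def
proof (intro degree_sum_le)
  fix l assume l: "l \<in> {..<m}"
  show "degree ([:2:] + (\<Sum>j\<in>{1..l}. smult (4 * cos (real j * th)) (cheb j))) \<le> m - 1"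
  proof (intro degree_add_le degree_sum_le)
    fix j assume "j \<in> {1..l}"
    hence "j \<le> m - 1" using l by auto
    thus "degree (smult (4 * cos (real j * th)) (cheb j)) \<le> m - 1"
      using degree_cheb[of j] degree_smult_le[of _ "cheb j"] by (meson order_trans)
  qed auto
qed auto


lemma sin_sq_abs: "(sin (\<bar>x::real\<bar>))^2 = (sin x)^2"
  by (cases "x \<ge> 0") auto


lemma one_plus_pos: "0 \<le> (c::real) \<Longrightarrow> 0 \<le> a \<Longrightarrow> 0 < 1 + c * a"
  by (metis add_pos_nonneg zero_less_one mult_nonneg_nonneg)

lemma Gk_upper:
  assumes a: "0 \<le> a" and h: "a = 0 \<or> a / (2*pi) \<le> \<bar>sin (v/2)\<bar>"
  shows "\<bar>Gk m v\<bar> \<le> 16 * pi^2 * (real m)^2 / (1 + real m * a)^2"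
proof (cases "real m * a \<le> 1")
  case True
  have "(1 + real m * a)^2 \<le> 2^2" using True a by (intro power_mono) auto
  hence "2 * (real m)^2 * (1 + real m * a)^2 \<le> 2 * (real m)^2 * 4" by (intro mult_left_mono) auto
  also have "\<dots> \<le> 16 * pi^2 * (real m)^2"
  proof -
    have "2^2 \<le> pi^2" using pi_ge_two by (intro power_mono) auto
    hence "8 \<le> 16 * pi^2" by simp
    hence "8 * (real m)^2 \<le> 16 * pi^2 * (real m)^2" by (intro mult_right_mono) auto
    thus ?thesis by simp
  qed
  finally have f: "2 * (real m)^2 * (1 + real m * a)^2 \<le> 16 * pi^2 * (real m)^2" .
  have "0 < 1 + real m * a" using a by (simp add: add_pos_nonneg)
  hence pos: "0 < (1 + real m * a)^2" by simp
  have "2 * (real m)^2 \<le> 16 * pi^2 * (real m)^2 / (1 + real m * a)^2"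
    using f by (simp add: pos_le_divide_eq[OF pos])
  with Gk_abs1[of m v] show ?thesis by linarith
next
  case False
  hence apos: "a > 0" using a by (cases "a = 0") auto
  hence sl: "a / (2*pi) \<le> \<bar>sin (v/2)\<bar>" using h by auto
  have p2: "0 < a / (2*pi)" using apos by simp
  hence sne: "sin (v/2) \<noteq> 0" using sl by auto
  have "(a/(2*pi))^2 \<le> (sin (v/2))^2"
    using sl p2 by (metis abs_le_square_iff abs_of_pos less_imp_le)
  moreover have "0 < (sin (v/2))^2" using sne by simp
  ultimately have "1 / (sin (v/2))^2 \<le> 1 / (a/(2*pi))^2"
    using p2 by (intro divide_left_mono mult_pos_pos) auto
  also have "\<dots> = 4 * pi^2 / a^2" by (simp add: field_simps power2_eq_square)
  also have "\<dots> \<le> 16 * pi^2 * (real m)^2 / (1 + real m * a)^2"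
  proof -
    have "(1 + real m * a)^2 \<le> (2 * real m * a)^2" using False apos by (intro power_mono) (auto simp: mult.commute)
    hence "4 * pi^2 * (1 + real m * a)^2 \<le> 4 * pi^2 * (2 * real m * a)^2" by (intro mult_left_mono) auto
    hence h1: "4 * pi^2 * (1 + real m * a)^2 \<le> 16 * pi^2 * (real m)^2 * a^2"
      by (simp add: power_mult_distrib)
    have pos: "0 < (1 + real m * a)^2" using apos one_plus_pos[of "real m" a] by simp
    have a2: "0 < a^2" using apos by simp
    have "4 * pi^2 \<le> 16 * pi^2 * (real m)^2 * a^2 / (1 + real m * a)^2"
      using h1 by (simp add: pos_le_divide_eq[OF pos])
    also have "\<dots> = (16 * pi^2 * (real m)^2 / (1 + real m * a)^2) * a^2" by simp
    finally show ?thesis by (simp add: pos_divide_le_eq[OF a2])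
  qed
  finally show ?thesis using Gk_abs2[OF sne, of m] by linarith
qed

lemma sin_half_diff:
  assumes "0 \<le> t" "t \<le> pi" "0 \<le> th" "th \<le> pi"
  shows "\<bar>t - th\<bar> / (2*pi) \<le> \<bar>sin ((t - th)/2)\<bar>"
proof -
  let ?a = "\<bar>t - th\<bar>"
  have "\<bar>sin ((t - th)/2)\<bar> = sin (?a/2)"
  proof (cases "t \<ge> th")
    case True thus ?thesis using assms by (auto simp: sin_ge_zero abs_of_nonneg)
  next
    case False
    have e: "(t - th)/2 = -((th - t)/2)" by (simp add: field_simps)
    have "0 \<le> sin ((th - t)/2)" using assms False by (intro sin_ge_zero) auto
    thus ?thesis using False by (simp only: e sin_minus) simp
  qed
  moreover have "(?a/2)/pi \<le> sin (?a/2)" using assms by (intro sin_ge_lin) auto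
  ultimately show ?thesis by simp
qed

lemma sin_half_sum:
  assumes "0 \<le> t" "t \<le> pi" "0 \<le> th" "th \<le> pi"
  shows "\<bar>t - th\<bar> / (2*pi) \<le> \<bar>sin ((t + th)/2)\<bar>"
proof -
  let ?a = "\<bar>t - th\<bar>"
  have "(?a/2)/pi \<le> sin (?a/2)" using assms by (intro sin_ge_lin) auto
  moreover have "sin (?a/2) \<le> sin ((t + th)/2)"
  proof (cases "(t + th)/2 \<le> pi/2")
    case True
    thus ?thesis using assms by (intro sin_monotone_2pi_le) auto
  next
    case False
    have "sin (?a/2) \<le> sin (pi - (t + th)/2)" using assms False by (intro sin_monotone_2pi_le) (auto split: abs_split simp: field_simps)
    thus ?thesis by simp
  qed
  moreover have "0 \<le> sin ((t + th)/2)" using assms by (intro sin_ge_zero) auto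
  ultimately show ?thesis by simp
qed

lemma Gk_lower:
  assumes m: "m \<ge> 1" and v: "0 < \<bar>v\<bar>" "\<bar>v\<bar> \<le> pi / real m"
  shows "(real m)^2 / pi^2 \<le> Gk m v"
proof -
  let ?b = "\<bar>v\<bar>/2"
  have mb: "real m * ?b \<le> pi/2" using v m by (simp add: field_simps)
  have b0: "0 < ?b" using v by simp
  have "?b \<le> real m * ?b" using m b0 by simp
  hence sb: "0 < sin ?b" using b0 mb pi_gt_zero by (intro sin_gt_zero) linarith+
  have s1: "(sin (v/2))^2 = (sin ?b)^2" using sin_sq_abs[of "v/2"] by simp
  have s2: "(sin (real m * v / 2))^2 = (sin (real m * ?b))^2"
    using sin_sq_abs[of "real m * v / 2"] by (simp add: abs_mult)
  have sne: "sin (v/2) \<noteq> 0" using s1 sb by (metis power_zero_numeral less_irrefl zero_less_power2)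
  have "Gk m v = (sin (real m * ?b))^2 / (sin ?b)^2" using Gk_eq[OF sne, of m] s1 s2 by simp
  moreover have "(real m * ?b / pi)^2 \<le> (sin (real m * ?b))^2"
    using sin_ge_lin[of "real m * ?b"] mb b0 by (intro power_mono) auto
  moreover have "(sin ?b)^2 \<le> ?b^2" using sin_x_le_x[of ?b] sb b0 by (intro power_mono) auto
  ultimately have "(real m * ?b / pi)^2 / ?b^2 \<le> Gk m v"
    using sb b0 by (metis frac_le zero_le_power2 zero_less_power)
  moreover have "(real m * ?b / pi)^2 / ?b^2 = (real m)^2 / pi^2" using b0 by (simp add: field_simps)
  ultimately show ?thesis by simp
qed


lemma cos_sub_bound:
  assumes t: "0 \<le> t" "t \<le> pi" and th: "0 \<le> th" "th \<le> pi"
  shows "\<bar>cos t - cos th\<bar> \<le> \<bar>t - th\<bar> * sin th + \<bar>t - th\<bar>^2 / 2"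
proof -
  let ?a = "\<bar>t - th\<bar>"
  have e: "cos t - cos th = 2 * sin ((t + th)/2) * sin ((th - t)/2)" by (rule cos_diff_cos)
  have s1: "\<bar>sin ((th - t)/2)\<bar> \<le> ?a/2"
    using abs_sin_x_le_abs_x[of "(th - t)/2"] by (simp add: abs_minus_commute)
  have e1: "(t + th)/2 = th + (t - th)/2" by (simp add: field_simps)
  have "sin ((t + th)/2) = sin th * cos ((t - th)/2) + cos th * sin ((t - th)/2)"
    by (simp only: e1 sin_add)
  hence "\<bar>sin ((t + th)/2)\<bar> \<le> \<bar>sin th\<bar> * \<bar>cos ((t - th)/2)\<bar> + \<bar>cos th\<bar> * \<bar>sin ((t - th)/2)\<bar>"
    by (metis abs_mult abs_triangle_ineq)
  also have "\<dots> \<le> sin th * 1 + 1 * (?a/2)"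
  proof (intro add_mono mult_mono)
    show "\<bar>sin ((t - th)/2)\<bar> \<le> ?a/2" using abs_sin_x_le_abs_x[of "(t - th)/2"] by simp
  qed (use th sin_ge_zero in auto)
  finally have s2: "\<bar>sin ((t + th)/2)\<bar> \<le> sin th + ?a/2" by simp
  have "\<bar>cos t - cos th\<bar> = 2 * \<bar>sin ((t + th)/2)\<bar> * \<bar>sin ((th - t)/2)\<bar>"
    by (simp add: e abs_mult)
  also have "\<dots> \<le> 2 * (sin th + ?a/2) * (?a/2)"
    using s1 s2 sin_ge_zero[OF th] by (intro mult_mono) auto
  also have "\<dots> = ?a * sin th + ?a^2/2" by (simp add: field_simps power2_eq_square)
  finally show ?thesis .
qed

lemma S_lower:
  assumes u: "-1 \<le> u" "u \<le> 1" and y: "-1 \<le> y" "y \<le> 1" and n: "n \<ge> 1"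
  shows "1 / (1 + real n * \<bar>arccos u - arccos y\<bar>)^2 \<le> delta_n n y / (\<bar>u - y\<bar> + delta_n n y)"
proof -
  define a where "a = \<bar>arccos u - arccos y\<bar>"
  define s where "s = sqrt (1 - y^2)"
  have a0: "0 \<le> a" by (simp add: a_def)
  have s0: "0 \<le> s" using y by (simp add: s_def abs_square_le_1)
  have ss: "sin (arccos y) = s" using y by (simp add: s_def sin_arccos)
  have "\<bar>u - y\<bar> \<le> a * s + a^2/2"
    using cos_sub_bound[of "arccos u" "arccos y"] u y arccos_bounded[of u] arccos_bounded[of y]
    by (simp add: a_def ss)
  have nn: "0 < real n" using n by simp
  define d where "d = delta_n n y"
  have dd: "d = s / real n + 1 / (real n)^2" by (simp add: d_def delta_n_def s_def)
  have dpos: "0 < d" using dd s0 nn by (simp add: add_nonneg_pos)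
  have "(1 + real n * a)^2 * d = d + (2 * a * s + 2 * a / real n + real n * a^2 * s + a^2)"
    using nn by (simp add: dd field_simps power2_eq_square)
  moreover have "0 \<le> 2 * a / real n" "0 \<le> real n * a^2 * s" "0 \<le> a * s" "0 \<le> a^2" using a0 s0 nn by auto
  ultimately have "\<bar>u - y\<bar> + d \<le> (1 + real n * a)^2 * d"
    using \<open>\<bar>u - y\<bar> \<le> a * s + a^2/2\<close> by linarith
  moreover have "0 < \<bar>u - y\<bar> + d" using dpos by simp
  moreover have "0 < (1 + real n * a)^2" using one_plus_pos[of "real n" a] a0 by simp
  ultimately have "1 / (1 + real n * a)^2 \<le> d / (\<bar>u - y\<bar> + d)"
    using dpos by (simp add: field_simps)
  thus ?thesis by (simp add: a_def d_def)
qed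

lemma wf_bound:
  fixes u y :: real
  assumes u: "-1 \<le> u" "u \<le> 1" and y: "-1 \<le> y" "y \<le> 1"
  shows "1 - u^2 \<le> 2 * (1 - y^2) + 2 * \<bar>u - y\<bar>"
proof (cases "y \<ge> 0")
  case True
  have "1 - u^2 = (1 - u) * (1 + u)" by (simp add: algebra_simps power2_eq_square)
  also have "\<dots> \<le> (1 - u) * 2" using u by (intro mult_left_mono) auto
  also have "y * y \<le> 1 * y" using True y by (intro mult_right_mono) auto
  hence "1 - y \<le> 1 - y^2" by (simp add: power2_eq_square)
  hence "(1 - u) * 2 \<le> 2 * (1 - y^2) + 2 * \<bar>u - y\<bar>" by (auto split: abs_split)
  finally show ?thesis .
next
  case False
  have "1 - u^2 = (1 - u) * (1 + u)" by (simp add: algebra_simps power2_eq_square)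
  also have "\<dots> \<le> 2 * (1 + u)" using u by (intro mult_right_mono) auto
  also have "y * y \<le> (-1) * y" using False y by (intro mult_right_mono_neg) auto
  hence "1 + y \<le> 1 - y^2" by (simp add: power2_eq_square)
  hence "2 * (1 + u) \<le> 2 * (1 - y^2) + 2 * \<bar>u - y\<bar>" by (auto split: abs_split)
  finally show ?thesis .
qed

lemma lin_aux: "2*(r::real) \<le> s2 + q \<Longrightarrow> y2 \<le> 1 \<Longrightarrow> d = r + q \<Longrightarrow> s2 = 1 - y2 \<Longrightarrow> 0 \<le> q \<Longrightarrow> d \<le> 2*(1 - y2 + q)"
  by (simp add: algebra_simps)

lemma wS_bound:
  assumes u: "-1 \<le> u" "u \<le> 1" and y: "-1 < y" "y < 1" and n: "n \<ge> 1"
  shows "(1 - u^2) * (delta_n n y / (\<bar>u - y\<bar> + delta_n n y)) \<le> 4 * (1 - y^2 + 1/(real n)^2)"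
proof -
  define s where "s = sqrt (1 - y^2)"
  define W where "W = 1 - y^2 + 1/(real n)^2"
  define d where "d = delta_n n y"
  have nn: "0 < real n" using n by simp
  have s0: "0 \<le> s" using y by (simp add: s_def abs_square_le_1)
  have s2: "s^2 = 1 - y^2" using y by (simp add: s_def abs_square_le_1)
  have dd: "d = s / real n + 1 / (real n)^2" by (simp add: d_def delta_n_def s_def)
  have dpos: "0 < d" using dd s0 nn by (simp add: add_nonneg_pos)
  have "0 \<le> (s - 1/real n)^2" by simp
  moreover have "(s - 1/real n)^2 = s^2 - 2*(s/real n) + 1/(real n)^2" by (simp add: power2_diff field_simps)
  ultimately have "2 * (s / real n) \<le> s^2 + 1/(real n)^2" by linarith
  moreover have "y^2 \<le> 1" using y by (simp add: abs_square_le_1)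
  ultimately have dW: "d \<le> 2 * W" using dd s2 unfolding W_def by (rule lin_aux) simp
  have wy: "1 - y^2 \<le> W" by (simp add: W_def)
  have "(1 - u^2) * d \<le> (2 * (1 - y^2) + 2 * \<bar>u - y\<bar>) * d"
    using wf_bound[of u y] u y dpos by (intro mult_right_mono) auto
  also have "\<dots> = 2 * (1 - y^2) * d + \<bar>u - y\<bar> * (2 * d)" by (simp add: algebra_simps)
  also have "\<dots> \<le> 4 * W * d + \<bar>u - y\<bar> * (4 * W)"
    using wy dW dpos by (intro add_mono mult_left_mono mult_right_mono) auto
  also have "\<dots> = 4 * W * (\<bar>u - y\<bar> + d)" by (simp add: algebra_simps)
  finally have "(1 - u^2) * d \<le> 4 * W * (\<bar>u - y\<bar> + d)" .
  moreover have "0 < \<bar>u - y\<bar> + d" using dpos by simp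
  ultimately show ?thesis by (simp add: W_def d_def[symmetric] field_simps)
qed


lemma window_pos:
  assumes y: "0 \<le> y" "y < 1" and n: "n \<ge> 1"
  shows "\<exists>a b. -1 \<le> a \<and> a < b \<and> b \<le> 1 \<and> delta_n n y / (8*pi^2) \<le> b - a \<and>
     (\<forall>u. a \<le> u \<and> u \<le> b \<longrightarrow> (1 - y^2 + 1/(real n)^2) / (16*pi^2) \<le> 1 - u^2 \<and>
        0 < \<bar>arccos u - arccos y\<bar> \<and> \<bar>arccos u - arccos y\<bar> \<le> 1 / real n)"
proof -
  define th where "th = arccos y"
  define h where "h = 1 / real n"
  define s where "s = sqrt (1 - y^2)"
  have nn: "1 \<le> real n" using n by simp
  have h0: "0 < h" "h \<le> 1" using nn by (auto simp: h_def)
  have "arccos y \<le> pi/2" using y by (intro arccos_le_pi2) auto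
  hence th0: "0 \<le> th" "th \<le> pi/2" using y arccos_lbound[of y] by (auto simp: th_def)
  have ss: "sin th = s" using y by (simp add: th_def s_def sin_arccos)
  have s0: "0 \<le> s" using y by (simp add: s_def abs_square_le_1)
  have s2: "s^2 = 1 - y^2" using y by (simp add: s_def abs_square_le_1)
  have sth: "s \<le> th" using sin_x_le_x[OF th0(1)] ss by simp
  have p3: "3 < pi" by (rule pi_gt3)
  have dd: "delta_n n y = s * h + h^2" by (simp add: delta_n_def s_def h_def power2_eq_square)
  define a where "a = cos (th + h)"
  define b where "b = cos (th + h/2)"
  have r1: "th + h \<le> pi" using th0 h0 p3 by linarith
  have ab: "arccos a = th + h" "arccos b = th + h/2"
    using th0 h0 r1 by (auto simp: a_def b_def intro!: arccos_cos)
  have "b - a = 2 * sin (((th + h/2) + (th + h))/2) * sin (((th + h) - (th + h/2))/2)"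
    unfolding a_def b_def by (rule cos_diff_cos)
  also have "((th + h/2) + (th + h))/2 = th + 3*h/4" by (simp add: field_simps)
  also have "((th + h) - (th + h/2))/2 = h/4" by (simp add: field_simps)
  finally have bma: "b - a = 2 * sin (th + 3*h/4) * sin (h/4)" .
  have sin1: "(h/4)/pi \<le> sin (h/4)" using h0 p3 by (intro sin_ge_lin) auto
  have sin2: "(th + 3*h/4)/(2*pi) \<le> sin (th + 3*h/4)" using h0 th0 by (intro sin_ge_lin2) auto
  have "2 * ((th + 3*h/4)/(2*pi)) * ((h/4)/pi) \<le> 2 * sin (th + 3*h/4) * sin (h/4)"
  proof -
    have "0 \<le> (th + 3*h/4)/(2*pi)" "0 \<le> (h/4)/pi" using th0 h0 by auto
    thus ?thesis using sin1 sin2 by (intro mult_mono) auto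
  qed
  moreover have "2 * ((th + 3*h/4)/(2*pi)) * ((h/4)/pi) = (th + 3*h/4) * h / (4*pi^2)"
    by (simp add: field_simps power2_eq_square)
  moreover have "delta_n n y / (8*pi^2) \<le> (th + 3*h/4) * h / (4*pi^2)"
  proof -
    have "s * h + h^2 \<le> 2 * ((th + 3*h/4) * h)"
    proof -
      have e: "2 * ((th + 3*h/4) * h) = 2*(th*h) + 3/2*(h*h)" by (simp add: algebra_simps)
      have "s*h \<le> th*h" using sth h0 by (intro mult_right_mono) auto
      moreover have "0 \<le> th*h" "0 \<le> h*h" using th0 h0 by auto
      ultimately show ?thesis unfolding e power2_eq_square by linarith
    qed
    hence "(s * h + h^2)/(8*pi^2) \<le> 2 * ((th + 3*h/4) * h)/(8*pi^2)"
      by (intro divide_right_mono) auto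
    thus ?thesis by (simp add: dd field_simps)
  qed
  ultimately have wid: "delta_n n y / (8*pi^2) \<le> b - a" using bma by linarith
  have dpos: "0 < delta_n n y" using dd h0 s0 by (simp add: add_nonneg_pos)
  hence "a < b" using wid by (smt (verit) divide_pos_pos pi_gt_zero zero_less_power)
  moreover have "-1 \<le> a" "b \<le> 1" by (auto simp: a_def b_def)
  moreover have "\<forall>u. a \<le> u \<and> u \<le> b \<longrightarrow> (1 - y^2 + 1/(real n)^2) / (16*pi^2) \<le> 1 - u^2 \<and>
        0 < \<bar>arccos u - arccos y\<bar> \<and> \<bar>arccos u - arccos y\<bar> \<le> 1 / real n"
  proof (intro allI impI)
    fix u assume u: "a \<le> u \<and> u \<le> b"
    have um: "-1 \<le> u" "u \<le> 1" using u \<open>-1 \<le> a\<close> \<open>b \<le> 1\<close> by auto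
    define t where "t = arccos u"
    have t1: "th + h/2 \<le> t" using arccos_le_arccos[of u b] u um \<open>b \<le> 1\<close> ab by (simp add: t_def)
    have t2: "t \<le> th + h" using arccos_le_arccos[of a u] u um \<open>-1 \<le> a\<close> ab by (simp add: t_def)
    have cu: "cos t = u" using um by (simp add: t_def)
    have "t / (2*pi) \<le> sin t" using t1 t2 th0 h0 by (intro sin_ge_lin2) auto
    moreover have "(s + h/2)/(2*pi) \<le> t/(2*pi)" using t1 sth by (intro divide_right_mono) auto
    ultimately have st: "(s + h/2)/(2*pi) \<le> sin t" by linarith
    have "((s + h/2)/(2*pi))^2 \<le> (sin t)^2"
      using st s0 h0 by (intro power_mono) auto
    moreover have "(sin t)^2 = 1 - u^2" using sin_cos_squared_add[of t] cu by simp
    moreover have "(1 - y^2 + 1/(real n)^2) / (16*pi^2) \<le> ((s + h/2)/(2*pi))^2"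
    proof -
      have "1 - y^2 + 1/(real n)^2 = s^2 + h^2" using s2 by (simp add: h_def power_divide)
      also have "\<dots> \<le> 4 * (s + h/2)^2" using s0 h0 by (simp add: power2_eq_square algebra_simps)
      finally have "(1 - y^2 + 1/(real n)^2) / (16*pi^2) \<le> 4 * (s + h/2)^2 / (16*pi^2)"
        by (intro divide_right_mono) auto
      also have "\<dots> = ((s + h/2)/(2*pi))^2" by (simp add: field_simps power2_eq_square)
      finally show ?thesis .
    qed
    ultimately have "(1 - y^2 + 1/(real n)^2) / (16*pi^2) \<le> 1 - u^2" by linarith
    moreover have "0 < \<bar>arccos u - arccos y\<bar>" "\<bar>arccos u - arccos y\<bar> \<le> 1 / real n"
    proof -
      have "0 < h/2" using h0 by simp
      hence "th < t" "t - th \<le> h" using t1 t2 by linarith+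
      thus "0 < \<bar>arccos u - arccos y\<bar>" "\<bar>arccos u - arccos y\<bar> \<le> 1 / real n"
        by (auto simp: t_def th_def h_def)
    qed
    ultimately show "(1 - y^2 + 1/(real n)^2) / (16*pi^2) \<le> 1 - u^2 \<and>
        0 < \<bar>arccos u - arccos y\<bar> \<and> \<bar>arccos u - arccos y\<bar> \<le> 1 / real n" by blast
  qed
  ultimately show ?thesis using wid by blast
qed

lemma window:
  assumes y: "-1 < y" "y < 1" and n: "n \<ge> 1"
  shows "\<exists>a b. -1 \<le> a \<and> a < b \<and> b \<le> 1 \<and> delta_n n y / (8*pi^2) \<le> b - a \<and>
     (\<forall>u. a \<le> u \<and> u \<le> b \<longrightarrow> (1 - y^2 + 1/(real n)^2) / (16*pi^2) \<le> 1 - u^2 \<and>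
        0 < \<bar>arccos u - arccos y\<bar> \<and> \<bar>arccos u - arccos y\<bar> \<le> 1 / real n)"
proof (cases "y \<ge> 0")
  case True thus ?thesis using window_pos[OF True y(2) n] by blast
next
  case False
  obtain a b where ab: "-1 \<le> a" "a < b" "b \<le> 1" "delta_n n (-y) / (8*pi^2) \<le> b - a"
    and P: "\<forall>u. a \<le> u \<and> u \<le> b \<longrightarrow> (1 - (-y)^2 + 1/(real n)^2) / (16*pi^2) \<le> 1 - u^2 \<and>
        0 < \<bar>arccos u - arccos (-y)\<bar> \<and> \<bar>arccos u - arccos (-y)\<bar> \<le> 1 / real n"
    using window_pos[of "-y" n] False y n by auto
  have dn: "delta_n n (-y) = delta_n n y" by (simp add: delta_n_def)
  show ?thesis
  proof (intro exI conjI allI impI)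
    show "-1 \<le> -b" "-b < -a" "-a \<le> 1" using ab by auto
    show "delta_n n y / (8*pi^2) \<le> -a - -b" using ab dn by simp
    fix u assume u: "-b \<le> u \<and> u \<le> -a"
    have um: "-1 \<le> u" "u \<le> 1" using u ab by auto
    have Pu: "(1 - (-y)^2 + 1/(real n)^2) / (16*pi^2) \<le> 1 - (-u)^2 \<and>
        0 < \<bar>arccos (-u) - arccos (-y)\<bar> \<and> \<bar>arccos (-u) - arccos (-y)\<bar> \<le> 1 / real n"
      using P[rule_format, of "-u"] u by auto
    have e: "\<bar>arccos (-u) - arccos (-y)\<bar> = \<bar>arccos u - arccos y\<bar>"
      using um y by (simp add: arccos_minus abs_minus_commute)
    show "(1 - y^2 + 1/(real n)^2) / (16*pi^2) \<le> 1 - u^2" using Pu by simp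
    show "0 < \<bar>arccos u - arccos y\<bar>" "\<bar>arccos u - arccos y\<bar> \<le> 1 / real n" using Pu e by auto
  qed
qed


lemma inv_pow_deriv_aux:
  fixes z :: real assumes "0 < z"
  shows "- (real i * (c * z ^ (i - Suc 0)) * inverse ((z ^ i) ^ Suc (Suc 0))) = - c * real i / (z ^ Suc i)"
proof (cases i)
  case 0 thus ?thesis by simp
next
  case (Suc j)
  thus ?thesis using assms by (simp add: field_simps)
qed

lemma deriv_left:
  fixes d y u :: real
  assumes z: "0 < y - u + d"
  shows "DERIV (\<lambda>u. inverse ((y - u + d)^i)) u :> real i / (y - u + d)^(Suc i)"
proof -
  have g: "DERIV (\<lambda>u. y - u + d) u :> -1" by (auto intro!: derivative_eq_intros)
  have inv: "DERIV (\<lambda>u. inverse ((y - u + d)^i)) u :> - (real i * (-1 * (y - u + d) ^ (i - Suc 0)) * inverse (((y - u + d)^i) ^ Suc (Suc 0)))"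
    by (rule DERIV_inverse_fun[OF DERIV_power[OF g]]) (use z in simp)
  show ?thesis using inv unfolding inv_pow_deriv_aux[OF z] by simp
qed

lemma deriv_right:
  fixes d y u :: real
  assumes z: "0 < u - y + d"
  shows "DERIV (\<lambda>u. inverse ((u - y + d)^i)) u :> - (real i / (u - y + d)^(Suc i))"
proof -
  have g: "DERIV (\<lambda>u. u - y + d) u :> 1" by (auto intro!: derivative_eq_intros)
  have inv: "DERIV (\<lambda>u. inverse ((u - y + d)^i)) u :> - (real i * (1 * (u - y + d) ^ (i - Suc 0)) * inverse (((u - y + d)^i) ^ Suc (Suc 0)))"
    by (rule DERIV_inverse_fun[OF DERIV_power[OF g]]) (use z in simp)
  show ?thesis using inv unfolding inv_pow_deriv_aux[OF z] by simp
qed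

lemma div_le_self_aux: "0 \<le> (X::real) \<Longrightarrow> 1 \<le> c \<Longrightarrow> X / c \<le> X"
proof -
  assume a: "0 \<le> X" "1 \<le> c"
  hence "X * 1 \<le> X * c" by (intro mult_left_mono) auto
  thus ?thesis using a by (simp add: pos_divide_le_eq)
qed

lemma left_int:
  fixes Q K :: "real \<Rightarrow> real" and x y d C :: real
  assumes xy: "x < y" "-1 \<le> x" and d: "0 < d" and i: "i \<ge> 1" and C: "0 \<le> C"
    and der: "\<And>u. -1 \<le> u \<Longrightarrow> u \<le> x \<Longrightarrow> DERIV Q u :> K u"
    and Kb: "\<And>u. -1 \<le> u \<Longrightarrow> u \<le> x \<Longrightarrow> K u \<le> C * (d / (y - u + d))^(Suc i)"
  shows "Q x - Q (-1) \<le> C * d * (d / (y - x + d))^i"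
proof -
  define Phi where "Phi u = C * d^(Suc i) / real i * inverse ((y - u + d)^i)" for u
  have "Phi (-1) - Q (-1) \<le> Phi x - Q x"
  proof (rule DERIV_nonneg_imp_nondecreasing[OF xy(2)])
    fix u assume u: "-1 \<le> u" "u \<le> x"
    have z: "0 < y - u + d" using u xy d by linarith
    have D: "DERIV (\<lambda>u. Phi u - Q u) u :> C * d^(Suc i) / real i * (real i / (y - u + d)^(Suc i)) - K u"
      unfolding Phi_def by (rule DERIV_diff[OF DERIV_cmult[OF deriv_left[OF z]] der[OF u]])
    have "C * d^(Suc i) / real i * (real i / (y - u + d)^(Suc i)) = C * (d / (y - u + d))^(Suc i)"
      using i by (simp add: power_divide)
    hence "0 \<le> C * d^(Suc i) / real i * (real i / (y - u + d)^(Suc i)) - K u" using Kb[OF u] by simp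
    with D show "\<exists>D. DERIV (\<lambda>u. Phi u - Q u) u :> D \<and> 0 \<le> D" by blast
  qed
  moreover have "0 \<le> Phi (-1)" using C d xy unfolding Phi_def by simp
  moreover have "Phi x \<le> C * d * (d / (y - x + d))^i"
  proof -
    have z: "0 < y - x + d" using xy d by linarith
    have "Phi x = (C * d * (d / (y - x + d))^i) / real i"
      unfolding Phi_def by (simp add: power_divide field_simps)
    also have "\<dots> \<le> C * d * (d / (y - x + d))^i"
      using i C d z by (intro div_le_self_aux) auto
    finally show ?thesis .
  qed
  ultimately show ?thesis by linarith
qed

lemma right_int:
  fixes Q K :: "real \<Rightarrow> real" and x y d C :: real
  assumes xy: "y < x" "x \<le> 1" and d: "0 < d" and i: "i \<ge> 1" and C: "0 \<le> C"
    and der: "\<And>u. x \<le> u \<Longrightarrow> u \<le> 1 \<Longrightarrow> DERIV Q u :> K u"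
    and Kb: "\<And>u. x \<le> u \<Longrightarrow> u \<le> 1 \<Longrightarrow> K u \<le> C * (d / (u - y + d))^(Suc i)"
  shows "Q 1 - Q x \<le> C * d * (d / (x - y + d))^i"
proof -
  define Phi where "Phi u = C * d^(Suc i) / real i * inverse ((u - y + d)^i)" for u
  have "- (Q x + Phi x) \<le> - (Q 1 + Phi 1)"
  proof (rule DERIV_nonneg_imp_nondecreasing[OF xy(2)])
    fix u assume u: "x \<le> u" "u \<le> 1"
    have z: "0 < u - y + d" using u xy d by linarith
    have D: "DERIV (\<lambda>u. - (Q u + Phi u)) u :> - (K u + C * d^(Suc i) / real i * (- (real i / (u - y + d)^(Suc i))))"
      unfolding Phi_def by (rule DERIV_minus[OF DERIV_add[OF der[OF u] DERIV_cmult[OF deriv_right[OF z]]]])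
    have "C * d^(Suc i) / real i * (real i / (u - y + d)^(Suc i)) = C * (d / (u - y + d))^(Suc i)"
      using i by (simp add: power_divide)
    hence "0 \<le> - (K u + C * d^(Suc i) / real i * (- (real i / (u - y + d)^(Suc i))))" using Kb[OF u] by simp
    with D show "\<exists>D. DERIV (\<lambda>u. - (Q u + Phi u)) u :> D \<and> 0 \<le> D" by blast
  qed
  moreover have "0 \<le> Phi 1" using C d xy unfolding Phi_def by simp
  moreover have "Phi x \<le> C * d * (d / (x - y + d))^i"
  proof -
    have z: "0 < x - y + d" using xy d by linarith
    have "Phi x = (C * d * (d / (x - y + d))^i) / real i"
      unfolding Phi_def by (simp add: power_divide field_simps)
    also have "\<dots> \<le> C * d * (d / (x - y + d))^i"
      using i C d z by (intro div_le_self_aux) auto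
    finally show ?thesis .
  qed
  ultimately show ?thesis by linarith
qed


definition Rf :: "nat \<Rightarrow> real \<Rightarrow> real \<Rightarrow> real" where
  "Rf n y x = (1 - x^2) / (1 - x^2 + (1 - y^2) + (1 / (real n)^2) * \<bar>sgn x - sgn y\<bar>)"

lemma sgn_diff_le2: "\<bar>sgn (x::real) - sgn y\<bar> \<le> 2"
  by (auto simp: sgn_real_def)

lemma Rf_den:
  assumes y: "-1 < y" "y < 1" and x: "-1 \<le> x" "x \<le> 1" and n: "n \<ge> 1"
  shows "0 < 1 - x^2 + (1 - y^2) + (1 / (real n)^2) * \<bar>sgn x - sgn y\<bar>"
    and "1 - x^2 + (1 - y^2) + (1 / (real n)^2) * \<bar>sgn x - sgn y\<bar> \<le> (1 - x^2) + 2 * (1 - y^2 + 1/(real n)^2)"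
proof -
  have y2: "y^2 < 1" using y by (simp add: abs_square_less_1)
  have x2: "x^2 \<le> 1" using x by (simp add: abs_square_le_1)
  have q: "0 \<le> 1 / (real n)^2" by simp
  have "(1 / (real n)^2) * \<bar>sgn x - sgn y\<bar> \<le> (1 / (real n)^2) * 2"
    using sgn_diff_le2[of x y] q by (intro mult_left_mono) auto
  moreover have "0 \<le> (1 / (real n)^2) * \<bar>sgn x - sgn y\<bar>" by simp
  ultimately show "0 < 1 - x^2 + (1 - y^2) + (1 / (real n)^2) * \<bar>sgn x - sgn y\<bar>"
    and "1 - x^2 + (1 - y^2) + (1 / (real n)^2) * \<bar>sgn x - sgn y\<bar> \<le> (1 - x^2) + 2 * (1 - y^2 + 1/(real n)^2)"
    using y2 x2 q by (smt (verit))+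
qed

lemma Rf_nonneg:
  assumes y: "-1 < y" "y < 1" and x: "-1 \<le> x" "x \<le> 1" and n: "n \<ge> 1"
  shows "0 \<le> Rf n y x"
proof -
  have "0 \<le> 1 - x^2" using x by (simp add: abs_square_le_1)
  thus ?thesis using Rf_den(1)[OF y x n] by (simp add: Rf_def)
qed

lemma Rf_third2:
  assumes y: "-1 < y" "y < 1" and x: "-1 \<le> x" "x \<le> 1" and n: "n \<ge> 1"
    and W: "1 - y^2 + 1/(real n)^2 \<le> 1 - x^2"
  shows "1/3 \<le> Rf n y x"
proof -
  let ?D = "1 - x^2 + (1 - y^2) + (1 / (real n)^2) * \<bar>sgn x - sgn y\<bar>"
  have y2: "y^2 < 1" using y by (simp add: abs_square_less_1)
  have wp: "0 < 1 - x^2" using W y2 by (smt (verit) zero_le_divide_1_iff zero_le_power2)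
  have "?D \<le> 3 * (1 - x^2)" using Rf_den(2)[OF y x n] W by (smt (verit))
  hence "(1 - x^2) / (3 * (1 - x^2)) \<le> (1 - x^2) / ?D"
    using wp Rf_den(1)[OF y x n] by (intro divide_left_mono) auto
  moreover have B: "(1 - x^2) / (3 * (1 - x^2)) = 1/3" using wp by simp
  ultimately show ?thesis unfolding Rf_def by linarith
qed

lemma Rf_ratio:
  assumes y: "-1 < y" "y < 1" and x: "-1 \<le> x" "x \<le> 1" and n: "n \<ge> 1"
    and W: "1 - x^2 < 1 - y^2 + 1/(real n)^2"
  shows "(1 - x^2) / (3 * (1 - y^2 + 1/(real n)^2)) \<le> Rf n y x"
proof -
  let ?D = "1 - x^2 + (1 - y^2) + (1 / (real n)^2) * \<bar>sgn x - sgn y\<bar>"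
  have "0 \<le> 1 - x^2" using x by (simp add: abs_square_le_1)
  moreover have "?D \<le> 3 * (1 - y^2 + 1/(real n)^2)" using Rf_den(2)[OF y x n] W by (smt (verit))
  ultimately show ?thesis
    using Rf_den(1)[OF y x n] unfolding Rf_def by (intro divide_left_mono mult_pos_pos) auto
qed

lemma Rf_third1:
  assumes y: "-1 < y" "y < 1" and x: "0 \<le> x" "x < y" and n: "n \<ge> 1"
  shows "1/3 \<le> Rf n y x"
proof (cases "x = 0")
  case True
  have sy: "sgn y = 1" using x by simp
  have "0 \<le> y^2" by simp
  moreover have "1 / (real n)^2 \<le> 1" using n by (simp add: field_simps one_le_power)
  moreover have "1 - 0^2 + (1 - y^2) + (1 / (real n)^2) * \<bar>sgn 0 - sgn y\<bar> = 2 - y^2 + 1 / (real n)^2"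
    using sy by simp
  ultimately have "1 - 0^2 + (1 - y^2) + (1 / (real n)^2) * \<bar>sgn 0 - sgn y\<bar> \<le> 3" by linarith
  moreover have "0 < 1 - 0^2 + (1 - y^2) + (1 / (real n)^2) * \<bar>sgn 0 - sgn y\<bar>"
    using Rf_den(1)[OF y, of 0 n] n by simp
  ultimately have "1/3 \<le> 1 / (1 - 0^2 + (1 - y^2) + (1 / (real n)^2) * \<bar>sgn 0 - sgn y\<bar>)"
    by (intro divide_left_mono) auto
  thus ?thesis using True by (simp add: Rf_def)
next
  case False
  hence xp: "0 < x" using x by simp
  have sg: "sgn x = sgn y" using xp x by simp
  have "x^2 \<le> y^2" using x by (intro power_mono) auto
  hence le: "1 - y^2 \<le> 1 - x^2" by simp
  have "\<bar>x\<bar> < 1" using x y by simp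
  hence wp: "0 < 1 - x^2" by (simp add: abs_square_less_1)
  have "\<bar>y\<bar> < 1" using y by simp
  hence "0 < 1 - y^2" by (simp add: abs_square_less_1)
  hence dp: "0 < 1 - x^2 + (1 - y^2)" using wp by simp
  have "1 - x^2 + (1 - y^2) \<le> 2 * (1 - x^2)" using le by simp
  hence "(1 - x^2) / (2 * (1 - x^2)) \<le> (1 - x^2) / (1 - x^2 + (1 - y^2))"
    using wp dp by (intro divide_left_mono mult_pos_pos) auto
  moreover have "(1 - x^2) / (2 * (1 - x^2)) = 1/2" using wp by simp
  moreover have "Rf n y x = (1 - x^2) / (1 - x^2 + (1 - y^2))" using sg by (simp add: Rf_def)
  ultimately have "1/2 \<le> Rf n y x" by linarith
  thus ?thesis by simp
qed

lemma Rf_third1':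
  assumes y: "-1 < y" "y < 1" and x: "x \<le> 0" "y < x" and n: "n \<ge> 1"
  shows "1/3 \<le> Rf n y x"
proof -
  have "1/3 \<le> Rf n (-y) (-x)" using Rf_third1[of "-y" "-x" n] assms by simp
  moreover have "Rf n (-y) (-x) = Rf n y x"
    by (simp add: Rf_def sgn_minus abs_minus_commute)
  ultimately show ?thesis by simp
qed


lemma key_div:
  fixes F M C d Sx Z :: real
  assumes F0: "0 \<le> F" and M: "Z \<le> M" and Zp: "0 < Z" and Fb: "F \<le> C * Sx"
  shows "2 * F / M \<le> 2 * C * Sx / Z"
proof -
  have "2 * F / M \<le> 2 * F / Z" using F0 M Zp by (intro divide_left_mono) auto
  also have "\<dots> \<le> 2 * (C * Sx) / Z" using Fb Zp by (intro divide_right_mono) auto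
  finally show ?thesis by simp
qed

lemma err_left:
  fixes Q K :: "real \<Rightarrow> real" and y x A0 A1 L :: real and n r s k :: nat
  assumes y: "-1 < y" "y < 1" and n: "n \<ge> 1" and k: "r + s + 2 \<le> k"
    and A: "0 < A0" "0 < A1" "0 < L"
    and der: "\<And>u. -1 \<le> u \<Longrightarrow> u \<le> 1 \<Longrightarrow> DERIV Q u :> K u"
    and Kup: "\<And>u. -1 \<le> u \<Longrightarrow> u \<le> 1 \<Longrightarrow> K u \<le> A0 * L * (1 - u^2)^r * (delta_n n y / (\<bar>u - y\<bar> + delta_n n y))^k"
    and mass: "A1 * L * delta_n n y * (1 - y^2 + 1/(real n)^2)^r \<le> Q 1 - Q (-1)"
    and x: "-1 \<le> x" "x < y"
    and F0: "0 \<le> Q x - Q (-1)"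
  shows "2 * (Q x - Q (-1)) / (Q 1 - Q (-1)) \<le> (2 * A0 * 12^r / A1) * (Rf n y x)^r * (delta_n n y / (\<bar>x - y\<bar> + delta_n n y))^s"
proof -
  define d where "d = delta_n n y"
  define W where "W = 1 - y^2 + 1/(real n)^2"
  define S where "S u = d / (\<bar>u - y\<bar> + d)" for u
  define F where "F = Q x - Q (-1)"
  define M where "M = Q 1 - Q (-1)"
  define R where "R = Rf n y x"
  have y2: "0 < 1 - y^2" using y by (simp add: abs_square_less_1)
  have s0: "0 \<le> sqrt (1 - y^2)" using y2 by simp
  have dpos: "0 < d" unfolding d_def delta_n_def using n s0 by (intro add_nonneg_pos) auto
  have Wpos: "0 < W" unfolding W_def using y2 by (simp add: add_pos_nonneg)
  have Zp: "0 < A1 * L * d * W^r" using A dpos Wpos by simp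
  have Mge: "A1 * L * d * W^r \<le> M" using mass by (simp add: M_def d_def W_def)
  have S0: "\<And>u. 0 < S u" using dpos by (simp add: S_def add_nonneg_pos)
  have S1: "\<And>u. S u \<le> 1" using dpos by (simp add: S_def)
  have Sl: "\<And>u. u \<le> x \<Longrightarrow> S u = d / (y - u + d)" using x by (simp add: S_def)
  have xm: "x \<le> 1" using x y by simp
  have R0: "0 \<le> R" unfolding R_def using Rf_nonneg[OF y x(1) xm n] .
  have Fx: "0 \<le> F" using F0 by (simp add: F_def)
  have derx: "\<And>u. -1 \<le> u \<Longrightarrow> u \<le> x \<Longrightarrow> DERIV Q u :> K u" using der xm by simp
  have Sxs: "\<And>j. s \<le> j \<Longrightarrow> S x ^ j \<le> S x ^ s"
    using S0 S1 by (intro power_decreasing) (auto simp: less_imp_le)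
  have main: "2 * F / M \<le> (2 * A0 * 12^r / A1) * R^r * S x ^ s"
  proof (cases "0 \<le> x \<or> W \<le> 1 - x^2")
    case True
    have R3: "1/3 \<le> R"
    proof (cases "0 \<le> x")
      case True show ?thesis unfolding R_def using Rf_third1[OF y True x(2) n] .
    next
      case False
      hence "W \<le> 1 - x^2" using \<open>0 \<le> x \<or> W \<le> 1 - x^2\<close> by simp
      thus ?thesis unfolding R_def W_def using Rf_third2[OF y x(1) xm n] by simp
    qed
    define C where "C = A0 * L * (4 * W)^r"
    have C0: "0 \<le> C" using A Wpos by (simp add: C_def)
    have Fb: "F \<le> C * d * (d / (y - x + d))^(k - r - 1)"
      unfolding F_def
    proof (rule left_int[OF x(2) x(1) dpos _ C0 derx])
      show "1 \<le> k - r - 1" using k by simp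
      fix u assume u: "-1 \<le> u" "u \<le> x"
      have um: "u \<le> 1" using u xm by simp
      have wS: "(1 - u^2) * S u \<le> 4 * W"
        using wS_bound[OF u(1) um y n] by (simp add: S_def d_def W_def)
      have wS0: "0 \<le> (1 - u^2) * S u" using S0[of u] u um by (simp add: abs_square_le_1 less_imp_le)
      have kk: "k = r + (k - r)" using k by simp
      have "(1 - u^2)^r * S u ^ k = ((1 - u^2) * S u)^r * S u ^ (k - r)"
        by (subst kk) (simp add: power_add power_mult_distrib)
      also have "\<dots> \<le> (4 * W)^r * S u ^ (k - r)"
        using wS wS0 S0[of u] by (intro mult_right_mono power_mono) (auto simp: less_imp_le)
      finally have "A0 * L * ((1 - u^2)^r * S u ^ k) \<le> A0 * L * ((4 * W)^r * S u ^ (k - r))"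
        using A by (intro mult_left_mono) auto
      moreover have "K u \<le> A0 * L * ((1 - u^2)^r * S u ^ k)"
        using Kup[OF u(1) um] by (simp add: S_def d_def mult.assoc)
      moreover have "Suc (k - r - 1) = k - r" using k by simp
      ultimately show "K u \<le> C * (d / (y - u + d)) ^ Suc (k - r - 1)"
        using Sl[OF u(2)] by (simp add: C_def mult.assoc)
    qed
    have "2 * F / M \<le> 2 * (C * d) * S x ^ (k - r - 1) / (A1 * L * d * W^r)"
      using key_div[OF Fx Mge Zp, of "C * d" "S x ^ (k - r - 1)"] Fb Sl[of x] by simp
    also have "\<dots> = (2 * A0 * 4^r / A1) * S x ^ (k - r - 1)"
      using A dpos Wpos by (simp add: C_def power_mult_distrib field_simps)
    also have "\<dots> \<le> (2 * A0 * 4^r / A1) * S x ^ s"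
      using Sxs[of "k - r - 1"] k A by (intro mult_left_mono) auto
    also have "\<dots> \<le> (2 * A0 * 4^r / A1) * (3^r * R^r) * S x ^ s"
    proof -
      have "(1/3)^r \<le> R^r" using R3 by (intro power_mono) auto
      hence "1 \<le> 3^r * R^r" by (simp add: power_divide field_simps)
      moreover have P0: "0 \<le> (2 * A0 * 4^r / A1) * S x ^ s" using A S0[of x] by (simp add: less_imp_le)
      ultimately have "(2 * A0 * 4^r / A1) * S x ^ s * 1 \<le> (2 * A0 * 4^r / A1) * S x ^ s * (3^r * R^r)"
        by (intro mult_left_mono) auto
      thus ?thesis by (simp add: mult_ac)
    qed
    also have "\<dots> = (2 * A0 * 12^r / A1) * R^r * S x ^ s"
    proof -
      have e12: "(12::real)^r = 4^r * 3^r" by (simp add: power_mult_distrib[symmetric])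
      show ?thesis unfolding e12 by (simp add: mult_ac)
    qed
    finally show ?thesis .
  next
    case False
    hence xn: "x < 0" and wl: "1 - x^2 < W" by auto
    define C where "C = A0 * L * (1 - x^2)^r"
    have wx0: "0 \<le> 1 - x^2" using x xm by (simp add: abs_square_le_1)
    have C0: "0 \<le> C" using A wx0 by (simp add: C_def)
    have Fb: "F \<le> C * d * (d / (y - x + d))^(k - 1)"
      unfolding F_def
    proof (rule left_int[OF x(2) x(1) dpos _ C0 derx])
      show "1 \<le> k - 1" using k by simp
      fix u assume u: "-1 \<le> u" "u \<le> x"
      have um: "u \<le> 1" using u xm by simp
      have "\<bar>x\<bar> \<le> \<bar>u\<bar>" using u xn by simp
      hence "x^2 \<le> u^2" by (simp add: abs_le_square_iff)
      hence "1 - u^2 \<le> 1 - x^2" by simp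
      moreover have "0 \<le> 1 - u^2" using u um by (simp add: abs_square_le_1)
      ultimately have "(1 - u^2)^r \<le> (1 - x^2)^r" by (intro power_mono) auto
      hence "A0 * L * (1 - u^2)^r * S u ^ k \<le> A0 * L * (1 - x^2)^r * S u ^ k"
        using A S0[of u] by (intro mult_right_mono mult_left_mono) (auto simp: less_imp_le)
      moreover have "K u \<le> A0 * L * (1 - u^2)^r * S u ^ k"
        using Kup[OF u(1) um] by (simp add: S_def d_def)
      moreover have "Suc (k - 1) = k" using k by simp
      ultimately show "K u \<le> C * (d / (y - u + d)) ^ Suc (k - 1)"
        using Sl[OF u(2)] by (simp add: C_def)
    qed
    have "2 * F / M \<le> 2 * (C * d) * S x ^ (k - 1) / (A1 * L * d * W^r)"
      using key_div[OF Fx Mge Zp, of "C * d" "S x ^ (k - 1)"] Fb Sl[of x] by simp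
    also have "\<dots> = (2 * A0 / A1) * ((1 - x^2) / W)^r * S x ^ (k - 1)"
      using A dpos Wpos by (simp add: C_def power_divide field_simps)
    also have "\<dots> \<le> (2 * A0 / A1) * (3 * R)^r * S x ^ s"
    proof (intro mult_mono)
      have "(1 - x^2) / (3 * W) \<le> R" unfolding R_def W_def using Rf_ratio[OF y x(1) xm n] wl by (simp add: W_def)
      hence "(1 - x^2) / W \<le> 3 * R" using Wpos by (simp add: field_simps)
      thus "((1 - x^2) / W)^r \<le> (3 * R)^r" using wx0 Wpos by (intro power_mono) auto
      show "S x ^ (k - 1) \<le> S x ^ s" using Sxs k by simp
    qed (use A R0 S0 wx0 Wpos in \<open>auto simp: less_imp_le\<close>)
    also have "\<dots> \<le> (2 * A0 * 12^r / A1) * R^r * S x ^ s"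
    proof -
      have "(3::real)^r \<le> 12^r" by (intro power_mono) auto
      hence "(2 * A0 / A1) * 3^r \<le> (2 * A0 / A1) * 12^r" using A by (intro mult_left_mono) auto
      hence "(2 * A0 / A1) * 3^r * (R^r * S x ^ s) \<le> (2 * A0 / A1) * 12^r * (R^r * S x ^ s)"
        using R0 S0[of x] by (intro mult_right_mono) (auto simp: less_imp_le)
      thus ?thesis by (simp add: power_mult_distrib mult.assoc)
    qed
    finally show ?thesis .
  qed
  thus ?thesis by (simp add: F_def M_def R_def S_def d_def)
qed


lemma err_right:
  fixes Q K :: "real \<Rightarrow> real" and y x A0 A1 L :: real and n r s k :: nat
  assumes y: "-1 < y" "y < 1" and n: "n \<ge> 1" and k: "r + s + 2 \<le> k"
    and A: "0 < A0" "0 < A1" "0 < L"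
    and der: "\<And>u. -1 \<le> u \<Longrightarrow> u \<le> 1 \<Longrightarrow> DERIV Q u :> K u"
    and Kup: "\<And>u. -1 \<le> u \<Longrightarrow> u \<le> 1 \<Longrightarrow> K u \<le> A0 * L * (1 - u^2)^r * (delta_n n y / (\<bar>u - y\<bar> + delta_n n y))^k"
    and mass: "A1 * L * delta_n n y * (1 - y^2 + 1/(real n)^2)^r \<le> Q 1 - Q (-1)"
    and x: "y < x" "x \<le> 1"
    and F0: "0 \<le> Q 1 - Q x"
  shows "2 * (Q 1 - Q x) / (Q 1 - Q (-1)) \<le> (2 * A0 * 12^r / A1) * (Rf n y x)^r * (delta_n n y / (\<bar>x - y\<bar> + delta_n n y))^s"
proof -
  define Q' where "Q' u = - Q (- u)" for u
  define K' where "K' u = K (- u)" for u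
  have y': "-1 < -y" "-y < 1" using y by auto
  have der': "\<And>u. -1 \<le> u \<Longrightarrow> u \<le> 1 \<Longrightarrow> DERIV Q' u :> K' u"
  proof -
    fix u :: real assume u: "-1 \<le> u" "u \<le> 1"
    have "DERIV Q (- u) :> K (- u)" using der u by simp
    hence "DERIV (\<lambda>u. Q (- u)) u :> - K (- u)" by (simp add: DERIV_mirror)
    hence "DERIV (\<lambda>u. - Q (- u)) u :> - (- K (- u))" by (rule DERIV_minus)
    thus "DERIV Q' u :> K' u" by (simp add: Q'_def[abs_def] K'_def)
  qed
  have dn: "delta_n n (-y) = delta_n n y" by (simp add: delta_n_def)
  have Kup': "\<And>u. -1 \<le> u \<Longrightarrow> u \<le> 1 \<Longrightarrow> K' u \<le> A0 * L * (1 - u^2)^r * (delta_n n (-y) / (\<bar>u - -y\<bar> + delta_n n (-y)))^k"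
  proof -
    fix u :: real assume u: "-1 \<le> u" "u \<le> 1"
    have "\<bar>u - -y\<bar> = \<bar>- u - y\<bar>" by (simp add: abs_minus_commute)
    thus "K' u \<le> A0 * L * (1 - u^2)^r * (delta_n n (-y) / (\<bar>u - -y\<bar> + delta_n n (-y)))^k"
      using Kup[of "-u"] u by (simp add: K'_def dn)
  qed
  have mass': "A1 * L * delta_n n (-y) * (1 - (-y)^2 + 1/(real n)^2)^r \<le> Q' 1 - Q' (-1)"
    using mass by (simp add: Q'_def dn)
  have x': "-1 \<le> -x" "-x < -y" using x by auto
  have F0': "0 \<le> Q' (-x) - Q' (-1)" using F0 by (simp add: Q'_def)
  have "2 * (Q' (-x) - Q' (-1)) / (Q' 1 - Q' (-1)) \<le> (2 * A0 * 12^r / A1) * (Rf n (-y) (-x))^r * (delta_n n (-y) / (\<bar>-x - -y\<bar> + delta_n n (-y)))^s"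
    by (rule err_left[OF y' n k A der' Kup' mass' x' F0'])
  moreover have "Rf n (-y) (-x) = Rf n y x" by (simp add: Rf_def sgn_minus abs_minus_commute)
  moreover have "\<bar>-x - -y\<bar> = \<bar>x - y\<bar>" by (simp add: abs_minus_commute)
  ultimately show ?thesis by (simp add: Q'_def dn)
qed


lemma pderiv_sum': "pderiv (sum f A) = (\<Sum>x\<in>A. pderiv (f x))"
  using higher_pderiv_sum[of 1 f A] by simp

lemma antideriv_exists:
  fixes p :: "real poly"
  shows "\<exists>Q. pderiv Q = p \<and> degree Q \<le> degree p + 1"
proof -
  define Q where "Q = (\<Sum>i\<le>degree p. monom (coeff p i / real (Suc i)) (Suc i))"
  have "pderiv Q = (\<Sum>i\<le>degree p. monom (coeff p i) i)"
    unfolding Q_def pderiv_sum' by (intro sum.cong refl) (simp add: pderiv_monom)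
  also have "\<dots> = p" by (rule poly_as_sum_of_monoms)
  finally have "pderiv Q = p" .
  moreover have "degree Q \<le> degree p + 1"
    unfolding Q_def by (intro degree_sum_le) (auto intro: order_trans[OF degree_monom_le])
  ultimately show ?thesis by blast
qed

lemma assemble:
  fixes Q K :: "real \<Rightarrow> real" and y x A0 A1 L :: real and n r s k :: nat
  assumes y: "-1 < y" "y < 1" and n: "n \<ge> 1" and k: "r + s + 2 \<le> k"
    and A: "0 < A0" "0 < A1" "0 < L"
    and der: "\<And>u. -1 \<le> u \<Longrightarrow> u \<le> 1 \<Longrightarrow> DERIV Q u :> K u"
    and Kpos: "\<And>u. -1 \<le> u \<Longrightarrow> u \<le> 1 \<Longrightarrow> 0 \<le> K u"
    and Kup: "\<And>u. -1 \<le> u \<Longrightarrow> u \<le> 1 \<Longrightarrow> K u \<le> A0 * L * (1 - u^2)^r * (delta_n n y / (\<bar>u - y\<bar> + delta_n n y))^k"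
    and mass: "A1 * L * delta_n n y * (1 - y^2 + 1/(real n)^2)^r \<le> Q 1 - Q (-1)"
    and x: "-1 \<le> x" "x \<le> 1"
  shows "\<bar>sgn (x - y) - (-1 + 2 * (Q x - Q (-1)) / (Q 1 - Q (-1)))\<bar> \<le>
    (2 * A0 * 12^r / A1 + 2^r) * (Rf n y x)^r * (delta_n n y / (\<bar>x - y\<bar> + delta_n n y))^s"
proof -
  define M where "M = Q 1 - Q (-1)"
  define d where "d = delta_n n y"
  define W where "W = 1 - y^2 + 1/(real n)^2"
  have y2: "0 < 1 - y^2" using y by (simp add: abs_square_less_1)
  have s0: "0 \<le> sqrt (1 - y^2)" using y2 by simp
  have dpos: "0 < d" unfolding d_def delta_n_def using n s0 by (intro add_nonneg_pos) auto
  have Wpos: "0 < W" unfolding W_def using y2 by (simp add: add_pos_nonneg)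
  have Mpos: "0 < M" using mass A dpos Wpos by (smt (verit) M_def W_def d_def mult_pos_pos zero_less_power)
  have mono: "\<And>a b. -1 \<le> a \<Longrightarrow> a \<le> b \<Longrightarrow> b \<le> 1 \<Longrightarrow> Q a \<le> Q b"
  proof -
    fix a b :: real assume ab: "-1 \<le> a" "a \<le> b" "b \<le> 1"
    show "Q a \<le> Q b"
    proof (rule DERIV_nonneg_imp_nondecreasing[OF ab(2)])
      fix t assume t: "a \<le> t" "t \<le> b"
      hence t1: "-1 \<le> t" "t \<le> 1" using ab by linarith+
      show "\<exists>D. DERIV Q t :> D \<and> 0 \<le> D" using der[OF t1] Kpos[OF t1] by blast
    qed
  qed
  have F0: "0 \<le> Q x - Q (-1)" using mono[of "-1" x] x by simp
  have F1: "0 \<le> Q 1 - Q x" using mono[of x 1] x by simp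
  have R0: "0 \<le> Rf n y x" using Rf_nonneg[OF y x n] .
  have S0: "0 \<le> d / (\<bar>x - y\<bar> + d)" using dpos by simp
  define T where "T = (Rf n y x)^r * (d / (\<bar>x - y\<bar> + d))^s"
  have T0: "0 \<le> T" using R0 S0 by (simp add: T_def)
  have C1: "(2 * A0 * 12^r / A1) * T \<le> (2 * A0 * 12^r / A1 + 2^r) * T"
    using T0 by (intro mult_right_mono) auto
  consider "x < y" | "x = y" | "y < x" by linarith
  thus ?thesis
  proof cases
    case 1
    have "\<bar>sgn (x - y) - (-1 + 2 * (Q x - Q (-1)) / M)\<bar> = 2 * (Q x - Q (-1)) / M"
      using 1 F0 Mpos by simp
    also have "\<dots> \<le> (2 * A0 * 12^r / A1) * T"
      using err_left[OF y n k A der Kup mass x(1) 1 F0] by (simp add: M_def T_def d_def mult.assoc)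
    finally show ?thesis using C1 by (simp add: M_def T_def d_def mult.assoc)
  next
    case 3
    have e: "1 - (-1 + 2 * (Q x - Q (-1)) / M) = 2 * (Q 1 - Q x) / M"
      using Mpos by (simp add: M_def field_simps)
    have "\<bar>sgn (x - y) - (-1 + 2 * (Q x - Q (-1)) / M)\<bar> = 2 * (Q 1 - Q x) / M"
      using 3 F1 Mpos e by simp
    also have "\<dots> \<le> (2 * A0 * 12^r / A1) * T"
      using err_right[OF y n k A der Kup mass 3 x(2) F1] by (simp add: M_def T_def d_def mult.assoc)
    finally show ?thesis using C1 by (simp add: M_def T_def d_def mult.assoc)
  next
    case 2
    have FM: "Q x - Q (-1) \<le> M" using F1 by (simp add: M_def)
    have "\<bar>-1 + 2 * (Q x - Q (-1)) / M\<bar> \<le> 1"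
    proof -
      have "0 \<le> (Q x - Q (-1)) / M" "(Q x - Q (-1)) / M \<le> 1"
        using F0 FM Mpos by (auto simp: divide_le_eq_1)
      moreover have "2 * (Q x - Q (-1)) / M = 2 * ((Q x - Q (-1)) / M)" by simp
      ultimately show ?thesis unfolding abs_le_iff by linarith
    qed
    hence a1: "\<bar>sgn (x - y) - (-1 + 2 * (Q x - Q (-1)) / M)\<bar> \<le> 1" using 2 by simp
    have e1: "Rf n y x = 1/2" using 2 y2 by (simp add: Rf_def)
    have e2: "d / (\<bar>x - y\<bar> + d) = 1" using 2 dpos by simp
    have "1 \<le> (2 * A0 * 12^r / A1 + 2^r) * (1/2)^r"
    proof -
      have "(2::real)^r * (1/2)^r = 1" by (simp add: power_mult_distrib[symmetric])
      moreover have "0 \<le> (2 * A0 * 12^r / A1) * (1/2)^r" using A by simp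
      ultimately show ?thesis by (simp add: distrib_right)
    qed
    also have "\<dots> = (2 * A0 * 12^r / A1 + 2^r) * (Rf n y x)^r * (d / (\<bar>x - y\<bar> + d))^s"
      unfolding e1 e2 by simp
    finally show ?thesis using a1 by (simp add: M_def d_def)
  qed
qed


lemma P_upper:
  fixes u y B :: real and n m :: nat
  assumes u: "-1 \<le> u" "u \<le> 1" and y: "-1 < y" "y < 1" and n: "n \<ge> 1" and m: "m \<ge> 1"
    and nB: "real n \<le> B * real m" and B: "1 \<le> B"
  shows "\<bar>poly (Pk m (arccos y)) u\<bar> \<le> 32 * pi^2 * B^2 * (real m)^2 * (delta_n n y / (\<bar>u - y\<bar> + delta_n n y))"
proof -
  define t where "t = arccos u"
  define th where "th = arccos y"
  define a where "a = \<bar>t - th\<bar>"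
  have t: "0 \<le> t" "t \<le> pi" using u arccos_bounded[of u] by (auto simp: t_def)
  have th: "0 \<le> th" "th \<le> pi" using y arccos_bounded[of y] by (auto simp: th_def)
  have a0: "0 \<le> a" by (simp add: a_def)
  have pe: "poly (Pk m th) u = Gk m (t - th) + Gk m (t + th)"
    using poly_Pk[of m th t] u by (simp add: t_def)
  have g1: "\<bar>Gk m (t - th)\<bar> \<le> 16 * pi^2 * (real m)^2 / (1 + real m * a)^2"
    using Gk_upper[OF a0, of "t - th" m] sin_half_diff[OF t th] by (simp add: a_def)
  have g2: "\<bar>Gk m (t + th)\<bar> \<le> 16 * pi^2 * (real m)^2 / (1 + real m * a)^2"
    using Gk_upper[OF a0, of "t + th" m] sin_half_sum[OF t th] by (simp add: a_def)
  have pb: "\<bar>poly (Pk m th) u\<bar> \<le> 32 * pi^2 * (real m)^2 * (1 / (1 + real m * a)^2)"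
  proof -
    have "\<bar>Gk m (t - th) + Gk m (t + th)\<bar> \<le> \<bar>Gk m (t - th)\<bar> + \<bar>Gk m (t + th)\<bar>"
      by (rule abs_triangle_ineq)
    moreover have "2 * (16 * pi^2 * (real m)^2 / (1 + real m * a)^2) = 32 * pi^2 * (real m)^2 * (1 / (1 + real m * a)^2)"
      by simp
    ultimately show ?thesis using g1 g2 pe by linarith
  qed
  have ma: "0 < 1 + real m * a" using one_plus_pos[of "real m" a] a0 by simp
  have na: "0 < 1 + real n * a" using one_plus_pos[of "real n" a] a0 by simp
  have "real n * a \<le> B * real m * a" using nB a0 by (intro mult_right_mono) auto
  hence "1 + real n * a \<le> B * (1 + real m * a)" using B by (simp add: algebra_simps)
  hence "(1 + real n * a)^2 \<le> (B * (1 + real m * a))^2" using na by (intro power_mono) auto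
  hence "1 / (B * (1 + real m * a))^2 \<le> 1 / (1 + real n * a)^2"
    using na ma B by (intro divide_left_mono mult_pos_pos) auto
  hence "B^2 * (1 / (B * (1 + real m * a))^2) \<le> B^2 * (1 / (1 + real n * a)^2)"
    by (intro mult_left_mono) auto
  moreover have "B^2 * (1 / (B * (1 + real m * a))^2) = 1 / (1 + real m * a)^2"
    using B ma by (simp add: power_mult_distrib)
  ultimately have "1 / (1 + real m * a)^2 \<le> B^2 * (1 / (1 + real n * a)^2)" by simp
  also have "\<dots> \<le> B^2 * (delta_n n y / (\<bar>u - y\<bar> + delta_n n y))"
    using S_lower[OF u _ _ n] y by (intro mult_left_mono) (auto simp: a_def t_def th_def)
  finally have "32 * pi^2 * (real m)^2 * (1 / (1 + real m * a)^2) \<le>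
      32 * pi^2 * (real m)^2 * (B^2 * (delta_n n y / (\<bar>u - y\<bar> + delta_n n y)))"
    by (intro mult_left_mono) auto
  with pb have "\<bar>poly (Pk m th) u\<bar> \<le> 32 * pi^2 * (real m)^2 * (B^2 * (delta_n n y / (\<bar>u - y\<bar> + delta_n n y)))"
    by (rule order_trans)
  thus ?thesis by (simp add: th_def mult_ac)
qed

lemma P_lower:
  fixes u y :: real and n m :: nat
  assumes u: "-1 \<le> u" "u \<le> 1" and y: "-1 < y" "y < 1" and m: "m \<ge> 1" and mn: "m \<le> n"
    and a: "0 < \<bar>arccos u - arccos y\<bar>" "\<bar>arccos u - arccos y\<bar> \<le> 1 / real n"
  shows "(real m)^2 / pi^2 \<le> poly (Pk m (arccos y)) u"
proof -
  define t where "t = arccos u"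
  define th where "th = arccos y"
  have t: "0 \<le> t" "t \<le> pi" using u arccos_bounded[of u] by (auto simp: t_def)
  have th: "0 < th" "th < pi" using arccos_lt_bounded[OF y] by (auto simp: th_def)
  have pe: "poly (Pk m th) u = Gk m (t - th) + Gk m (t + th)"
    using poly_Pk[of m th t] u by (simp add: t_def)
  have "1 / real n \<le> pi / real m"
  proof -
    have "1 / real n \<le> 1 / real m" using m mn by (intro divide_left_mono) auto
    also have "\<dots> \<le> pi / real m" using m pi_ge_two by (intro divide_right_mono) auto
    finally show ?thesis .
  qed
  hence g1: "(real m)^2 / pi^2 \<le> Gk m (t - th)"
    using Gk_lower[OF m, of "t - th"] a by (simp add: t_def th_def)
  have "0 < sin ((t + th)/2)" using t th by (intro sin_gt_zero) auto
  hence "0 \<le> Gk m (t + th)" using Gk_eq[of "t + th" m] by simp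
  thus ?thesis using g1 pe by (simp add: th_def)
qed


lemma m_facts:
  fixes n r k :: nat
  assumes n: "n \<ge> 2*r+1" and k: "k \<ge> 1"
  defines "m \<equiv> (n - 1 - 2*r) div k + 1"
  shows "m \<ge> 1" "m \<le> n" "2*r + k * (m - 1) \<le> n - 1" "real n \<le> real (k + 2*r + 1) * real m"
proof -
  define q where "q = n - 1 - 2*r"
  have mq: "m = q div k + 1" by (simp add: m_def q_def)
  show "m \<ge> 1" by (simp add: mq)
  have "q div k \<le> q" by simp
  moreover have "q + 1 \<le> n" using n by (simp add: q_def)
  ultimately show "m \<le> n" using mq by linarith
  have "k * (q div k) \<le> q" by (simp add: mult.commute)
  moreover have "2*r + q = n - 1" using n by (simp add: q_def)
  moreover have "k * (m - 1) = k * (q div k)" by (simp add: mq)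
  ultimately show "2*r + k * (m - 1) \<le> n - 1" by linarith
  have "q = k * (q div k) + q mod k" by simp
  moreover have "q mod k < k" using k by simp
  moreover have "k * m = k * (q div k) + k" by (simp add: mq algebra_simps)
  ultimately have "q + 1 \<le> k * m" by linarith
  hence "n \<le> k * m + 2*r" using n by (simp add: q_def)
  also have "\<dots> \<le> k * m + 2*r*m + m"
  proof -
    have "2*r*1 \<le> 2*r*m" using \<open>m \<ge> 1\<close> by (intro mult_left_mono) auto
    thus ?thesis by linarith
  qed
  also have "\<dots> = (k + 2*r + 1) * m" by (simp add: algebra_simps)
  finally have "n \<le> (k + 2*r + 1) * m" .
  hence "real n \<le> real ((k + 2*r + 1) * m)" by (simp only: of_nat_le_iff)
  thus "real n \<le> real (k + 2*r + 1) * real m" by (simp only: of_nat_mult)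
qed


theorem mainTheorem4:
  fixes r s :: nat
  shows "\<exists>c::real. c > 0 \<and>
    (\<forall>n::nat. n \<ge> 2*r+1 \<longrightarrow>
      (\<forall>y::real. -1 < y \<and> y < 1 \<longrightarrow>
        (\<exists>p :: real poly. degree p \<le> n \<and>
          (\<forall>x::real. -1 \<le> x \<and> x \<le> 1 \<longrightarrow>
            \<bar>sgn (x - y) - poly p x\<bar> \<le>
              c * ((1 - x^2) / (1 - x^2 + (1 - y^2) + (1 / (real n)^2) * \<bar>sgn x - sgn y\<bar>)) ^ r
                * (delta_n n y / (\<bar>x - y\<bar> + delta_n n y)) ^ s))))"
proof -
  define k where "k = 2 * (r + s + 2)"
  define B where "B = real (k + 2*r + 1)"
  define A0 where "A0 = (32 * pi^2 * B^2)^k"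
  define A1 where "A1 = 1 / (8 * pi^2 * (16 * pi^2)^r * pi^(2*k))"
  define c where "c = 2 * A0 * 12^r / A1 + 2^r"
  have k1: "k \<ge> 1" and kr: "r + s + 2 \<le> k" and ke: "even k" by (auto simp: k_def)
  have B1: "1 \<le> B" by (simp add: B_def)
  have A0p: "0 < A0" using B1 by (simp add: A0_def)
  have A1p: "0 < A1" by (simp add: A1_def)
  have cp: "0 < c" using A0p A1p by (simp add: c_def add_pos_pos)
  have main: "\<exists>p :: real poly. degree p \<le> n \<and>
          (\<forall>x::real. -1 \<le> x \<and> x \<le> 1 \<longrightarrow>
            \<bar>sgn (x - y) - poly p x\<bar> \<le>
              c * ((1 - x^2) / (1 - x^2 + (1 - y^2) + (1 / (real n)^2) * \<bar>sgn x - sgn y\<bar>)) ^ r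
                * (delta_n n y / (\<bar>x - y\<bar> + delta_n n y)) ^ s)"
    if n: "n \<ge> 2*r+1" and y: "-1 < y" "y < 1" for n :: nat and y :: real
  proof -
    define m where "m = (n - 1 - 2*r) div k + 1"
    have m1: "m \<ge> 1" and mn: "m \<le> n" and deg: "2*r + k * (m - 1) \<le> n - 1"
      and nB: "real n \<le> B * real m"
      using m_facts[OF n k1] by (auto simp: m_def B_def)
    have n1: "n \<ge> 1" using n by simp
    define th where "th = arccos y"
    define P where "P = Pk m th"
    define Kp where "Kp = [:1, 0, -1:]^r * P^k"
    define L where "L = (real m)^(2*k)"
    define d where "d = delta_n n y"
    define W where "W = 1 - y^2 + 1/(real n)^2"
    define S where "S u = d / (\<bar>u - y\<bar> + d)" for u
    have Lp: "0 < L" using m1 by (simp add: L_def)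
    have polyK: "\<And>u. poly Kp u = (1 - u^2)^r * (poly P u)^k"
      by (simp add: Kp_def poly_power power2_eq_square algebra_simps)
    have degK: "degree Kp \<le> n - 1"
    proof -
      have "degree Kp \<le> degree (([:1, 0, -1:] :: real poly)^r) + degree (P^k)" unfolding Kp_def by (rule Polynomial.degree_mult_le)
      also have "\<dots> \<le> 2 * r + (m - 1) * k"
      proof (intro add_mono)
        show "degree (([:1, 0, -1:] :: real poly)^r) \<le> 2 * r"
          using degree_power_le[of "[:1, 0, -1:] :: real poly" r] by simp
        show "degree (P^k) \<le> (m - 1) * k"
          using degree_power_le[of P k] degree_Pk[of m th] unfolding P_def
          by (meson le_trans mult_le_mono1)
      qed
      finally show ?thesis using deg by (simp add: mult.commute)
    qed
    obtain Q where Q: "pderiv Q = Kp" "degree Q \<le> degree Kp + 1" using antideriv_exists by blast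
    have der: "\<And>u. DERIV (poly Q) u :> poly Kp u" using poly_DERIV[of Q] Q(1) by simp
    have Kpos: "\<And>u. -1 \<le> u \<Longrightarrow> u \<le> 1 \<Longrightarrow> 0 \<le> poly Kp u"
    proof -
      fix u :: real assume u: "-1 \<le> u" "u \<le> 1"
      have "0 \<le> 1 - u^2" using u by (simp add: abs_square_le_1)
      thus "0 \<le> poly Kp u" unfolding polyK
        by (intro mult_nonneg_nonneg zero_le_power zero_le_even_power[OF ke])
    qed
    have Kup: "\<And>u. -1 \<le> u \<Longrightarrow> u \<le> 1 \<Longrightarrow> poly Kp u \<le> A0 * L * (1 - u^2)^r * (delta_n n y / (\<bar>u - y\<bar> + delta_n n y))^k"
    proof -
      fix u :: real assume u: "-1 \<le> u" "u \<le> 1"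
      have Pb: "\<bar>poly P u\<bar> \<le> 32 * pi^2 * B^2 * (real m)^2 * S u"
        using P_upper[OF u y n1 m1 nB B1] by (simp add: P_def th_def S_def d_def)
      have "(poly P u)^k = \<bar>poly P u\<bar>^k" using ke by (simp add: power_even_abs)
      also have "\<dots> \<le> (32 * pi^2 * B^2 * (real m)^2 * S u)^k" using Pb by (intro power_mono) auto
      also have "\<dots> = A0 * L * S u ^ k"
        by (simp add: A0_def L_def power_mult_distrib power_mult[symmetric] mult.commute)
      finally have "(poly P u)^k \<le> A0 * L * S u ^ k" .
      moreover have "0 \<le> (1 - u^2)^r" using u by (simp add: abs_square_le_1)
      ultimately have "(1 - u^2)^r * (poly P u)^k \<le> (1 - u^2)^r * (A0 * L * S u ^ k)"
        by (intro mult_left_mono) auto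
      thus "poly Kp u \<le> A0 * L * (1 - u^2)^r * (delta_n n y / (\<bar>u - y\<bar> + delta_n n y))^k"
        unfolding polyK by (simp add: S_def d_def mult_ac)
    qed
    have mono: "\<And>a b. -1 \<le> a \<Longrightarrow> a \<le> b \<Longrightarrow> b \<le> 1 \<Longrightarrow> poly Q a \<le> poly Q b"
    proof -
      fix a b :: real assume ab: "-1 \<le> a" "a \<le> b" "b \<le> 1"
      show "poly Q a \<le> poly Q b"
      proof (rule DERIV_nonneg_imp_nondecreasing[OF ab(2)])
        fix t assume t: "a \<le> t" "t \<le> b"
        hence t1: "-1 \<le> t" "t \<le> 1" using ab by linarith+
        show "\<exists>D. DERIV (poly Q) t :> D \<and> 0 \<le> D" using der[of t] Kpos[OF t1] by blast
      qed
    qed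
    have mass: "A1 * L * delta_n n y * (1 - y^2 + 1/(real n)^2)^r \<le> poly Q 1 - poly Q (-1)"
    proof -
      obtain a b where ab: "-1 \<le> a" "a < b" "b \<le> 1" "d / (8*pi^2) \<le> b - a"
        and win: "\<forall>u. a \<le> u \<and> u \<le> b \<longrightarrow> W / (16*pi^2) \<le> 1 - u^2 \<and>
          0 < \<bar>arccos u - arccos y\<bar> \<and> \<bar>arccos u - arccos y\<bar> \<le> 1 / real n"
        using window[OF y n1] unfolding d_def W_def by blast
      obtain z where z: "a < z" "z < b" "poly Q b - poly Q a = (b - a) * poly Kp z"
        using MVT2[OF ab(2), of "poly Q" "poly Kp"] der by blast
      have zm: "-1 \<le> z" "z \<le> 1" using z ab by auto
      have wz: "W / (16*pi^2) \<le> 1 - z^2" "0 < \<bar>arccos z - arccos y\<bar>" "\<bar>arccos z - arccos y\<bar> \<le> 1 / real n"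
        using win z by auto
      have Wp: "0 < W" unfolding W_def using y by (simp add: abs_square_less_1 add_pos_nonneg)
      have Pl: "(real m)^2 / pi^2 \<le> poly P z"
        using P_lower[OF zm y m1 mn wz(2) wz(3)] by (simp add: P_def th_def)
      have "(W / (16*pi^2))^r \<le> (1 - z^2)^r" using wz(1) Wp by (intro power_mono) auto
      moreover have "((real m)^2 / pi^2)^k \<le> (poly P z)^k" using Pl by (intro power_mono) auto
      ultimately have Kl: "(W / (16*pi^2))^r * ((real m)^2 / pi^2)^k \<le> poly Kp z"
      proof -
        have "0 \<le> 1 - z^2" using zm by (simp add: abs_square_le_1)
        thus ?thesis unfolding polyK using Wp \<open>(W / (16*pi^2))^r \<le> (1 - z^2)^r\<close> \<open>((real m)^2 / pi^2)^k \<le> (poly P z)^k\<close>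
          by (intro mult_mono) auto
      qed
      have dp: "0 \<le> d / (8*pi^2)" unfolding d_def delta_n_def using y
        by (simp add: abs_square_le_1 less_imp_le)
      have "(d / (8*pi^2)) * ((W / (16*pi^2))^r * ((real m)^2 / pi^2)^k) \<le> (b - a) * poly Kp z"
        using ab(4) Kl dp Wp by (intro mult_mono) auto
      also have "\<dots> = poly Q b - poly Q a" using z by simp
      also have "\<dots> \<le> poly Q 1 - poly Q (-1)" using mono[of "-1" a] mono[of b 1] ab by auto
      finally have *: "(d / (8*pi^2)) * ((W / (16*pi^2))^r * ((real m)^2 / pi^2)^k) \<le> poly Q 1 - poly Q (-1)" .
      have "(d / (8*pi^2)) * ((W / (16*pi^2))^r * ((real m)^2 / pi^2)^k) = A1 * L * d * W^r"
        by (simp add: A1_def L_def power_divide power_mult[symmetric] power_mult_distrib mult_ac)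
      with * show ?thesis by (simp add: d_def W_def)
    qed
    define M where "M = poly Q 1 - poly Q (-1)"
    define p where "p = [: -1 - 2 * poly Q (-1) / M :] + smult (2 / M) Q"
    have degp: "degree p \<le> n"
    proof -
      have "degree (smult (2 / M) Q) \<le> n"
        using degree_smult_le[of "2/M" Q] Q(2) degK n by linarith
      thus ?thesis unfolding p_def by (intro degree_add_le) auto
    qed
    have polyp: "\<And>x. poly p x = -1 + 2 * (poly Q x - poly Q (-1)) / M"
      by (simp add: p_def field_simps diff_divide_distrib add_divide_distrib)
    show ?thesis
    proof (intro exI conjI allI impI)
      show "degree p \<le> n" by (rule degp)
      fix x :: real assume x: "-1 \<le> x \<and> x \<le> 1"
      have "\<bar>sgn (x - y) - (-1 + 2 * (poly Q x - poly Q (-1)) / (poly Q 1 - poly Q (-1)))\<bar> \<le>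
          (2 * A0 * 12^r / A1 + 2^r) * (Rf n y x)^r * (delta_n n y / (\<bar>x - y\<bar> + delta_n n y))^s"
        by (rule assemble[OF y n1 kr A0p A1p Lp der Kpos Kup mass]) (use x in auto)
      thus "\<bar>sgn (x - y) - poly p x\<bar> \<le>
              c * ((1 - x^2) / (1 - x^2 + (1 - y^2) + (1 / (real n)^2) * \<bar>sgn x - sgn y\<bar>)) ^ r
                * (delta_n n y / (\<bar>x - y\<bar> + delta_n n y)) ^ s"
        by (simp add: polyp M_def c_def Rf_def)
    qed
  qed
  show ?thesis using cp main by blast
qed

end
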